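(* Let $X$ be a CFG-space over a Boolean ring $B$, $0\in X$, and let $U\subseteq X$ with $0\in U$ be a CFG-space. Then $U^{\perp}=\{x\in X: x\perp y \text{ for all } y\in U\}$ is a CFG-space, and every element of $X$ is a convex combination of elements of $U\cup U^{\perp}$.
   Context: $B$ is a Boolean ring ($a\vee b=a+b+ab$, $a\le b\iff ab=a$; $a_1\oplus\cdots\oplus a_n$ denotes a sum of pairwise disjoint elements). A Boolean metric space over $B$: set $X$ with $d:X\times X\to B$, $d(x,y)=0\iff x=y$, symmetric, $d(x,z)\le d(x,y)\vee d(y,z)$. For $x_1,\dots,x_n\in X$, $a_i\in B$ with $a_1\oplus\cdots\oplus a_n=1$, $x$ is a convex combination of the $x_i$ with coefficients $a_i$ if $a_id(x,x_i)=0$ for all $i$. A CFG-space is a space in which all such combinations exist and every element is a convex combination of elements of some fixed finite subset. In the pointed space $(X,0)$, $|x|=d(0,x)$, and $x\perp y$ (orthogonal) means $d(x,y)=|x|\vee|y|$. *)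

theory Defs
  imports Main
begin

definition boolean_ring_type :: "'b::comm_ring_1 itself \<Rightarrow> bool" where
  "boolean_ring_type _ \<longleftrightarrow> (\<forall>a::'b. a * a = a)"

definition bjoin :: "'b::comm_ring_1 \<Rightarrow> 'b \<Rightarrow> 'b" where
  "bjoin a b = a + b + a * b"

definition ble :: "'b::comm_ring_1 \<Rightarrow> 'b \<Rightarrow> bool" where
  "ble a b \<longleftrightarrow> a * b = a"

definition boolean_metric :: "'a set \<Rightarrow> ('a \<Rightarrow> 'a \<Rightarrow> 'b::comm_ring_1) \<Rightarrow> bool" where
  "boolean_metric X d \<longleftrightarrow>
     (\<forall>x\<in>X. \<forall>y\<in>X. d x y = 0 \<longleftrightarrow> x = y) \<and>
     (\<forall>x\<in>X. \<forall>y\<in>X. d x y = d y x) \<and>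
     (\<forall>x\<in>X. \<forall>y\<in>X. \<forall>z\<in>X. ble (d x z) (bjoin (d x y) (d y z)))"

definition partition_unity :: "nat \<Rightarrow> (nat \<Rightarrow> 'b::comm_ring_1) \<Rightarrow> bool" where
  "partition_unity n a \<longleftrightarrow>
     (\<forall>i<n. \<forall>j<n. i \<noteq> j \<longrightarrow> a i * a j = 0) \<and> (\<Sum>i<n. a i) = 1"

definition convex_comb :: "('a \<Rightarrow> 'a \<Rightarrow> 'b::comm_ring_1) \<Rightarrow> 'a \<Rightarrow> nat \<Rightarrow> (nat \<Rightarrow> 'b) \<Rightarrow> (nat \<Rightarrow> 'a) \<Rightarrow> bool" where
  "convex_comb d x n a p \<longleftrightarrow> partition_unity n a \<and> (\<forall>i<n. a i * d x (p i) = 0)"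

definition cfg_space :: "'a set \<Rightarrow> ('a \<Rightarrow> 'a \<Rightarrow> 'b::comm_ring_1) \<Rightarrow> bool" where
  "cfg_space X d \<longleftrightarrow> boolean_metric X d \<and>
     (\<forall>n a p. partition_unity n a \<and> (\<forall>i<n. p i \<in> X) \<longrightarrow> (\<exists>x\<in>X. convex_comb d x n a p)) \<and>
     (\<exists>F. finite F \<and> F \<subseteq> X \<and>
        (\<forall>x\<in>X. \<exists>n a p. (\<forall>i<n. p i \<in> F) \<and> convex_comb d x n a p))"

text \<open>Orthogonality in the pointed space (X, o): |x| = d z x.\<close>
definition orth :: "('a \<Rightarrow> 'a \<Rightarrow> 'b::comm_ring_1) \<Rightarrow> 'a \<Rightarrow> 'a \<Rightarrow> 'a \<Rightarrow> bool" where
  "orth d z x y \<longleftrightarrow> d x y = bjoin (d z x) (d z y)"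

definition orth_compl :: "'a set \<Rightarrow> ('a \<Rightarrow> 'a \<Rightarrow> 'b::comm_ring_1) \<Rightarrow> 'a \<Rightarrow> 'a set \<Rightarrow> 'a set" where
  "orth_compl X d z U = {x\<in>X. \<forall>y\<in>U. orth d z x y}"

end

theory Submission
  imports Defs
begin

locale bctx =
  fixes X :: "'a set" and d :: "'a \<Rightarrow> 'a \<Rightarrow> 'b::comm_ring_1"
  assumes idem: "\<And>a::'b. a * a = a" and bm: "boolean_metric X d"
begin

lemma two: "(a::'b) + a = 0"
proof -
  have "a+a = (a+a)*(a+a)" by (rule idem[symmetric])
  also have "\<dots> = a*a+a*a+(a*a+a*a)" by (simp only: distrib_left distrib_right)
  also have "\<dots> = (a+a)+(a+a)" by (simp only: idem)
  finally have "(a+a)+(a+a) = (a+a)+0" by simp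
  thus ?thesis by (simp only: add_left_cancel)
qed
lemma idem2: "(a::'b) * (a * b) = a * b" by (simp add: mult.assoc[symmetric] idem)
lemma two2: "(a::'b) + (a + b) = b" by (simp add: add.assoc[symmetric] two)
lemma neg: "- (a::'b) = a" using two[of a] by (metis add_eq_0_iff)
lemma dif: "(a::'b) - b = a + b" by (simp add: neg)
lemma b_solve: "(a::'b) + b = c \<Longrightarrow> b = c + a"
  by (metis two2 add.commute)
lemmas bs = algebra_simps idem idem2 two two2 neg dif

lemma dsym: "x\<in>X \<Longrightarrow> y\<in>X \<Longrightarrow> d x y = d y x"
  using bm unfolding boolean_metric_def by blast

lemma tri: "x\<in>X \<Longrightarrow> y\<in>X \<Longrightarrow> w\<in>X \<Longrightarrow> d x w * (d x y + d y w + d x y * d y w) = d x w"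
  using bm unfolding boolean_metric_def ble_def bjoin_def by blast

lemma L1:
  assumes "x\<in>X" "p\<in>X" "y\<in>X" "a * d x p = 0"
  shows "a * d x y = a * d p y"
proof -
  have t1: "d x y * (d x p + d p y + d x p * d p y) = d x y" using tri assms by blast
  have t2: "d p y * (d x p + d x y + d x p * d x y) = d p y"
    using tri[of p x y] dsym[of p x] assms by simp
  have h: "a * d x p = 0" by fact
  have "a * d x y = a * (d x y * (d x p + d p y + d x p * d p y))" using t1 by simp
  also have "\<dots> = d x y * (a * d x p) + a * d x y * d p y + d x y * d p y * (a * d x p)"
    by (simp add: algebra_simps)
  also have "\<dots> = a * d x y * d p y" using h by simp
  finally have 1: "a * d x y = a * d x y * d p y" .
  have "a * d p y = a * (d p y * (d x p + d x y + d x p * d x y))" using t2 by simp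
  also have "\<dots> = d p y * (a * d x p) + a * d x y * d p y + d x y * d p y * (a * d x p)"
    by (simp add: algebra_simps)
  also have "\<dots> = a * d x y * d p y" using h by simp
  finally show ?thesis using 1 by simp
qed

lemma bjoin_loc: "a * A = a * A' \<Longrightarrow> a * bjoin A C = a * bjoin A' C"
proof -
  assume h: "a * A = a * A'"
  have "a * bjoin A C = a*A + a*C + (a*A)*C" unfolding bjoin_def by (simp add: algebra_simps)
  also have "\<dots> = a*A' + a*C + (a*A')*C" using h by simp
  also have "\<dots> = a * bjoin A' C" unfolding bjoin_def by (simp add: algebra_simps)
  finally show ?thesis .
qed

lemma split_eq:
  assumes "partition_unity n f" "\<forall>i<n. f i * A = f i * E" shows "A = E"
proof -
  have s: "(\<Sum>i<n. f i) = 1" using assms(1) unfolding partition_unity_def by blast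
  have "A = (\<Sum>i<n. f i) * A" using s by simp
  also have "\<dots> = (\<Sum>i<n. f i * A)" by (simp add: sum_distrib_right)
  also have "\<dots> = (\<Sum>i<n. f i * E)" using assms(2) by simp
  also have "\<dots> = (\<Sum>i<n. f i) * E" by (simp add: sum_distrib_right)
  finally show ?thesis using s by simp
qed

lemma split2: "(C::'b) * A = C * E \<Longrightarrow> (1 + C) * A = (1 + C) * E \<Longrightarrow> A = E"
proof -
  assume h1: "C * A = C * E" and h2: "(1 + C) * A = (1 + C) * E"
  have "A = C * A + (1 + C) * A" by (simp add: bs)
  also have "\<dots> = C * E + (1 + C) * E" using h1 h2 by simp
  also have "\<dots> = E" by (simp add: bs)
  finally show ?thesis .
qed

definition loc where
  "loc x r (n::nat) a p \<longleftrightarrow> (\<forall>i<n. \<forall>j<n. i \<noteq> j \<longrightarrow> a i * a j = 0) \<and> (\<Sum>i<n. a i) = r \<and>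
     (\<forall>i<n. a i * d x (p i) = 0) \<and> (\<forall>i<n. a i * r = a i)"

lemma loc_cons:
  assumes L: "loc x r n a p" and er: "e * r = 0" and eq: "e * d x q = 0"
  shows "loc x (e + r) (Suc n) (case_nat e a) (case_nat q p)"
proof -
  have D: "\<forall>i<n. \<forall>j<n. i \<noteq> j \<longrightarrow> a i * a j = 0" and S: "(\<Sum>i<n. a i) = r"
    and Z: "\<forall>i<n. a i * d x (p i) = 0" and R: "\<forall>i<n. a i * r = a i"
    using L unfolding loc_def by auto
  have ea: "e * a j = 0" if "j < n" for j
  proof -
    have "e * a j = e * (a j * r)" using R that by simp
    also have "\<dots> = (e * r) * a j" by (simp add: ac_simps)
    finally show ?thesis using er by simp
  qed
  have ae: "a j * e = 0" if "j < n" for j using ea[OF that] by (simp add: mult.commute)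
  show ?thesis unfolding loc_def
  proof (intro conjI allI impI)
    fix i j assume "i < Suc n" "j < Suc n" "i \<noteq> j"
    then show "case_nat e a i * case_nat e a j = 0"
      using D ea ae by (cases i; cases j) auto
  next
    show "(\<Sum>i<Suc n. case_nat e a i) = e + r" using S by (simp del: sum.lessThan_Suc add: sum.lessThan_Suc_shift)
  next
    fix i assume "i < Suc n"
    then show "case_nat e a i * d x (case_nat q p i) = 0" using Z eq by (cases i) auto
  next
    fix i assume "i < Suc n"
    then show "case_nat e a i * (e + r) = case_nat e a i"
      using R ae er idem[of e] by (cases i) (auto simp: distrib_left)
  qed
qed

end

definition cc :: "('a \<Rightarrow> 'a \<Rightarrow> 'b::comm_ring_1) \<Rightarrow> 'a list \<Rightarrow> 'a \<Rightarrow> 'b" where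
  "cc d us x = foldr (\<lambda>u acc. bjoin (1 + d x u) acc) us 0"

context bctx
begin

lemma cc_loc:
  assumes "x \<in> X" "set us \<subseteq> X"
  shows "\<exists>n a p. (\<forall>i<n. p i \<in> set us) \<and> loc x (cc d us x) n a p"
  using assms(2)
proof (induction us)
  case Nil
  have "loc x (cc d [] x) 0 (\<lambda>_. 0) (\<lambda>_. x)" unfolding loc_def cc_def by simp
  then show ?case by force
next
  case (Cons u us)
  then obtain n a p where P: "\<forall>i<n. p i \<in> set us" and L: "loc x (cc d us x) n a p" by auto
  define c where "c = cc d us x"
  define b where "b = 1 + d x u"
  have ceq: "cc d (u # us) x = b * (1 + c) + c"
    unfolding c_def b_def cc_def bjoin_def by (simp add: algebra_simps)
  have e1: "(b * (1 + c)) * c = 0" by (simp add: bs)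
  have e2: "(b * (1 + c)) * d x u = 0"
    unfolding b_def by (simp add: bs)
  have "loc x (b * (1 + c) + c) (Suc n) (case_nat (b * (1 + c)) a) (case_nat u p)"
    using loc_cons[OF L[folded c_def] e1 e2] .
  moreover have "\<forall>i<Suc n. case_nat u p i \<in> set (u # us)"
    using P by (auto split: nat.split)
  ultimately show ?case using ceq by metis
qed

lemma cc_P:
  assumes "u \<in> set us"
  shows "(1 + d x u) * cc d us x = 1 + d x u"
  using assms
proof (induction us)
  case Nil then show ?case by simp
next
  case (Cons u' us)
  define c where "c = cc d us x"
  define b where "b = 1 + d x u"
  define b' where "b' = 1 + d x u'"
  have ceq: "cc d (u' # us) x = b' + c + b' * c"
    unfolding c_def b'_def cc_def bjoin_def by simp
  show ?case
  proof (cases "u \<in> set us")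
    case True
    then have h: "b * c = b" using Cons unfolding b_def c_def by blast
    have "b * (b' + c + b' * c) = b * b' + b * c + b' * (b * c)" by (simp add: algebra_simps)
    also have "\<dots> = b" using h by (simp add: bs)
    finally show ?thesis unfolding ceq b_def[symmetric] .
  next
    case False
    then have "u = u'" using Cons by auto
    then have "b' = b" unfolding b_def b'_def by simp
    then show ?thesis unfolding ceq b_def[symmetric] by (simp add: bs)
  qed
qed

end

theorem mainTheorem9:
  fixes X U :: "'a set" and d :: "'a \<Rightarrow> 'a \<Rightarrow> 'b::comm_ring_1" and z :: 'a
  assumes "boolean_ring_type TYPE('b)"
    and "cfg_space X d"
    and "z \<in> X"
    and "U \<subseteq> X" and "z \<in> U"
    and "cfg_space U d"
  shows "cfg_space (orth_compl X d z U) d \<and>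
         (\<forall>x\<in>X. \<exists>n a p. (\<forall>i<n. p i \<in> U \<union> orth_compl X d z U) \<and> convex_comb d x n a p)"
proof -
  have idem: "\<And>a::'b. a*a = a" using assms(1) unfolding boolean_ring_type_def by blast
  have bmX: "boolean_metric X d"
    and combX: "\<forall>n a p. partition_unity n a \<and> (\<forall>i<n. p i \<in> X) \<longrightarrow> (\<exists>x\<in>X. convex_comb d x n a p)"
    and "\<exists>F. finite F \<and> F \<subseteq> X \<and> (\<forall>x\<in>X. \<exists>n a p. (\<forall>i<n. p i \<in> F) \<and> convex_comb d x n a p)"
    using assms(2) unfolding cfg_space_def by blast+
  then obtain FX where FX: "finite FX" "FX \<subseteq> X"
    "\<forall>x\<in>X. \<exists>n a p. (\<forall>i<n. p i \<in> FX) \<and> convex_comb d x n a p" by blast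
  obtain FU where FU: "finite FU" "FU \<subseteq> U"
    "\<forall>x\<in>U. \<exists>n a p. (\<forall>i<n. p i \<in> FU) \<and> convex_comb d x n a p"
    using assms(6) unfolding cfg_space_def by blast
  obtain us where us: "set us = FU" using finite_list FU(1) by blast
  interpret bctx X d using idem bmX by unfold_locales
  have usX: "set us \<subseteq> X" using us FU assms(4) by blast
  define c where "c = cc d us"
  have hx_ex: "\<forall>x\<in>X. \<exists>w. w \<in> X \<and> c x * d w z = 0 \<and> (1 + c x) * d w x = 0"
  proof
    fix x assume x: "x\<in>X"
    let ?a = "\<lambda>i::nat. if i = 0 then c x else 1 + c x"
    let ?p = "\<lambda>i::nat. if i = 0 then z else x"
    have pu: "partition_unity 2 ?a"
      unfolding partition_unity_def
    proof (intro conjI allI impI)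
      fix i j assume "i<(2::nat)" "j<2" "i\<noteq>j"
      moreover have "c x * (1 + c x) = 0" "(1 + c x) * c x = 0" by (simp_all add: bs)
      ultimately show "?a i * ?a j = 0" by (auto simp: numeral_2_eq_2 less_Suc_eq)
    next
      show "(\<Sum>i<2. ?a i) = 1" by (simp add: numeral_2_eq_2 bs)
    qed
    have "\<forall>i<2. ?p i \<in> X" using x assms(3) by auto
    from combX[rule_format, OF conjI[OF pu this]] obtain w where w: "w \<in> X" "convex_comb d w 2 ?a ?p"
      by blast
    have cw: "\<forall>i<2. ?a i * d w (?p i) = 0" using w(2) unfolding convex_comb_def by blast
    have "c x * d w z = 0" using cw[rule_format, of 0] by simp
    moreover have "(1 + c x) * d w x = 0" using cw[rule_format, of 1] by simp
    ultimately show "\<exists>w. w \<in> X \<and> c x * d w z = 0 \<and> (1 + c x) * d w x = 0" using w by blast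
  qed
  then obtain hx where hx: "\<forall>x\<in>X. hx x \<in> X \<and> c x * d (hx x) z = 0 \<and> (1 + c x) * d (hx x) x = 0"
    using bchoice[OF hx_ex] by blast
  have cloc: "\<exists>n a p. (\<forall>i<n. p i \<in> FU) \<and> loc x (c x) n a p" if "x \<in> X" for x
    using cc_loc[OF that usX] us c_def by simp
  have cP: "(1 + d x u) * c x = 1 + d x u" if "u \<in> FU" for x u
    using cc_P[of u us x] that us c_def by simp
  have sub: "orth_compl X d z U \<subseteq> X" unfolding orth_compl_def by auto
  have UX: "y \<in> X" if "y \<in> U" for y using that assms(4) by blast
  have FUX: "u \<in> X" if "u \<in> FU" for u using that FU(2) assms(4) by blast
  have claimA: "hx x \<in> orth_compl X d z U" if x: "x \<in> X" for x
  proof -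
    define w where "w = hx x"
    define C where "C = c x"
    have wX: "w \<in> X" and h1: "C * d w z = 0" and h2: "(1 + C) * d w x = 0"
      using hx x unfolding w_def C_def by auto
    have "orth d z w y" if y: "y \<in> U" for y
    proof -
      have yX: "y \<in> X" using UX y .
      define E where "E = bjoin (d z w) (d z y)"
      have tr: "d w y * E = d w y"
        using tri[OF wX assms(3) yX] dsym[OF wX assms(3)] unfolding E_def bjoin_def by simp
      have "C * d w y = C * E"
      proof -
        have "C * d w y = C * d z y" using L1[OF wX assms(3) yX h1] .
        moreover have "C * d z w = C * 0" using h1 dsym[OF wX assms(3)] by simp
        then have "C * E = C * bjoin 0 (d z y)" unfolding E_def by (rule bjoin_loc)
        ultimately show ?thesis unfolding bjoin_def by simp
      qed
      moreover have "(1 + C) * d w y = (1 + C) * E"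
      proof -
        obtain n f q where q: "\<forall>i<n. q i \<in> FU" and cq: "convex_comb d y n f q" using FU(3)[rule_format, OF y] by blast
        have pu: "partition_unity n f" using cq unfolding convex_comb_def by blast
        show ?thesis
        proof (rule split_eq[OF pu], intro allI impI)
          fix i assume i: "i < n"
          have qX: "q i \<in> X" using FUX q i by blast
          have fq: "f i * d y (q i) = 0" using cq i unfolding convex_comb_def by blast
          have a1: "(1 + C) * d w y = (1 + C) * d x y" using L1[OF wX x yX h2] .
          have "f i * d y x = f i * d (q i) x" using L1[OF yX qX x fq] .
          then have a2: "f i * d x y = f i * d x (q i)" using dsym x yX qX by simp
          have cp: "(1 + d x (q i)) * C = 1 + d x (q i)" using cP q i unfolding C_def by blast
          have a3: "(1 + C) * d x (q i) = 1 + C"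
          proof -
            have "C + d x (q i) * C = 1 + d x (q i)" using cp by (simp add: distrib_right)
            then have "d x (q i) * C = (1 + d x (q i)) + C" by (rule b_solve)
            then have "(1 + C) * d x (q i) = d x (q i) + ((1 + d x (q i)) + C)"
              by (simp add: distrib_right mult.commute)
            also have "\<dots> = d x (q i) + (d x (q i) + (1 + C))" by (simp only: ac_simps)
            also have "\<dots> = 1 + C" by (rule two2)
            finally show ?thesis .
          qed
          have k1: "f i * ((1 + C) * d w y) = f i * (1 + C)"
          proof -
            have "f i * ((1 + C) * d w y) = (1 + C) * (f i * d x y)" using a1 by (simp add: ac_simps)
            also have "\<dots> = f i * ((1 + C) * d x (q i))" using a2 by (simp add: ac_simps)
            finally show ?thesis using a3 by simp
          qed
          define K where "K = f i * (1 + C)"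
          have K1: "K * d w y = K" using k1 unfolding K_def by (simp add: mult.assoc)
          have "K * E = (K * d w y) * E" using K1 by simp
          also have "\<dots> = K * (d w y * E)" by (simp add: mult.assoc)
          also have "\<dots> = K" using tr K1 by simp
          finally have K2: "K * E = K" .
          show "f i * ((1 + C) * d w y) = f i * ((1 + C) * E)"
            using K1 K2 unfolding K_def by (simp add: mult.assoc)
        qed
      qed
      ultimately have "d w y = E" by (rule split2)
      then show ?thesis unfolding orth_def E_def .
    qed
    then show ?thesis using wX unfolding orth_compl_def w_def by blast
  qed
  have claimB: "g * d w (hx h) = 0"
    if w: "w \<in> orth_compl X d z U" and h: "h \<in> X" and gh: "g * d w h = 0" for w h g
  proof -
    define v where "v = hx h"
    define C where "C = c h"
    have wX: "w \<in> X" using w sub by blast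
    have vX: "v \<in> X" and h1: "C * d v z = 0" and h2: "(1 + C) * d v h = 0"
      using hx h unfolding v_def C_def by auto
    have p1: "(1 + C) * (g * d w v) = 0"
    proof -
      have "g * d w v = g * d h v" using L1[OF wX h vX gh] .
      then have "(1 + C) * (g * d w v) = g * ((1 + C) * d v h)" using dsym[OF h vX] by (simp add: ac_simps)
      then show ?thesis using h2 by simp
    qed
    have p2: "C * (g * d w v) = 0"
    proof -
      have "C * d v w = C * d z w" using L1[OF vX assms(3) wX h1] .
      moreover have "C * (g * d w v) = g * (C * d v w)" using dsym[OF wX vX] by (simp add: ac_simps)
      ultimately have e: "C * (g * d w v) = g * (C * d z w)" by simp
      obtain n a p where p: "\<forall>i<n. p i \<in> FU" and L: "loc h C n a p" using cloc[OF h] C_def by blast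
      have S: "(\<Sum>i<n. a i) = C" and Z: "\<forall>i<n. a i * d h (p i) = 0" using L unfolding loc_def by auto
      have "a i * (g * d z w) = 0" if i: "i < n" for i
      proof -
        have pX: "p i \<in> X" using FUX p i by blast
        have pU: "p i \<in> U" using FU(2) p i by blast
        have o: "d w (p i) = bjoin (d z w) (d z (p i))" using w pU unfolding orth_compl_def orth_def by blast
        have "g * d w (p i) = g * d h (p i)" using L1[OF wX h pX gh] .
        then have z1: "a i * (g * d w (p i)) = 0" using Z i by (metis mult.left_commute mult_zero_right)
        have z2: "d z w * d w (p i) = d z w" unfolding o bjoin_def by (simp add: bs)
        have "a i * (g * d z w) = (a i * (g * d w (p i))) * d z w" using z2 by (metis mult.assoc mult.commute)
        then show ?thesis using z1 by simp
      qed
      then have "(\<Sum>i<n. a i * (g * d z w)) = 0" by simp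
      moreover have "C * (g * d z w) = (\<Sum>i<n. a i * (g * d z w))"
        unfolding S[symmetric] by (rule sum_distrib_right)
      ultimately have "C * (g * d z w) = 0" by simp
      then show ?thesis using e by (simp add: ac_simps)
    qed
    have "g * d w v = C * (g * d w v) + (1 + C) * (g * d w v)" by (simp add: bs)
    then show ?thesis using p1 p2 unfolding v_def by simp
  qed
  have part1: "cfg_space (orth_compl X d z U) d"
    unfolding cfg_space_def
  proof (intro conjI)
    show "boolean_metric (orth_compl X d z U) d"
      using bmX sub unfolding boolean_metric_def by blast
  next
    show "\<forall>n a p. partition_unity n a \<and> (\<forall>i<n. p i \<in> orth_compl X d z U) \<longrightarrow>
      (\<exists>x\<in>orth_compl X d z U. convex_comb d x n a p)"
    proof (intro allI impI, elim conjE)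
      fix n and a :: "nat \<Rightarrow> 'b" and p assume pu: "partition_unity n a" and pO: "\<forall>i<n. p i \<in> orth_compl X d z U"
      then have "\<forall>i<n. p i \<in> X" using sub by blast
      from combX[rule_format, OF conjI[OF pu this]] obtain x where x: "x \<in> X" "convex_comb d x n a p"
        by blast
      have "orth d z x y" if y: "y \<in> U" for y
        unfolding orth_def
      proof (rule split_eq[OF pu], intro allI impI)
        fix i assume i: "i < n"
        have yX: "y \<in> X" using UX y .
        have pX: "p i \<in> X" and o: "orth d z (p i) y" using pO i sub y unfolding orth_compl_def by auto
        have ax: "a i * d x (p i) = 0" using x i unfolding convex_comb_def by blast
        have "a i * d x y = a i * d (p i) y" using L1[OF x(1) pX yX ax] .
        also have "\<dots> = a i * bjoin (d z (p i)) (d z y)" using o unfolding orth_def by simp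
        also have "\<dots> = a i * bjoin (d z x) (d z y)"
        proof (rule bjoin_loc)
          have "a i * d x z = a i * d (p i) z" using L1[OF x(1) pX assms(3) ax] .
          then show "a i * d z (p i) = a i * d z x" using dsym x(1) pX assms(3) by simp
        qed
        finally show "a i * d x y = a i * bjoin (d z x) (d z y)" .
      qed
      then have "x \<in> orth_compl X d z U" using x unfolding orth_compl_def by blast
      then show "\<exists>x\<in>orth_compl X d z U. convex_comb d x n a p" using x by blast
    qed
  next
    show "\<exists>F. finite F \<and> F \<subseteq> orth_compl X d z U \<and>
        (\<forall>x\<in>orth_compl X d z U. \<exists>n a p. (\<forall>i<n. p i \<in> F) \<and> convex_comb d x n a p)"
    proof (intro exI[of _ "hx ` FX"] conjI ballI)
      show "finite (hx ` FX)" using FX(1) by simp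
      show "hx ` FX \<subseteq> orth_compl X d z U" using claimA FX(2) by blast
    next
      fix w assume w: "w \<in> orth_compl X d z U"
      then have "w \<in> X" using sub by blast
      then obtain n g h where h: "\<forall>i<n. h i \<in> FX" and cw: "convex_comb d w n g h"
        using FX(3)[rule_format, OF \<open>w \<in> X\<close>] by blast
      have cc1: "convex_comb d w n g (\<lambda>i. hx (h i))"
        using cw claimB[OF w] h FX(2) unfolding convex_comb_def by blast
      have cc2: "\<forall>i<n. hx (h i) \<in> hx ` FX" using h by blast
      show "\<exists>n a p. (\<forall>i<n. p i \<in> hx ` FX) \<and> convex_comb d w n a p"
        apply (rule exI[where x=n], rule exI[where x=g], rule exI[where x="\<lambda>i. hx (h i)"])
        using cc1 cc2 by simp
    qed
  qed
  have part2: "\<exists>n a p. (\<forall>i<n. p i \<in> U \<union> orth_compl X d z U) \<and> convex_comb d x n a p"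
    if x: "x \<in> X" for x
  proof -
    obtain n a p where p: "\<forall>i<n. p i \<in> FU" and L: "loc x (c x) n a p" using cloc[OF x] by blast
    have e1: "(1 + c x) * c x = 0" by (simp add: bs)
    have e2: "(1 + c x) * d x (hx x) = 0" using hx x dsym[of x "hx x"] by auto
    have L2: "loc x (1 + c x + c x) (Suc n) (case_nat (1 + c x) a) (case_nat (hx x) p)"
      using loc_cons[OF L e1 e2] .
    have "1 + c x + c x = 1" by (simp add: bs)
    then have "convex_comb d x (Suc n) (case_nat (1 + c x) a) (case_nat (hx x) p)"
      using L2 unfolding loc_def convex_comb_def partition_unity_def by simp
    moreover have "\<forall>i<Suc n. case_nat (hx x) p i \<in> U \<union> orth_compl X d z U"
      using p FU(2) claimA[OF x] by (auto split: nat.split)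
    ultimately show ?thesis by blast
  qed
  show ?thesis using part1 part2 by blast
qed

end
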